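(* If $\mathbf c_1,\mathbf c_2\in\mathrm{GF}(q^m)^n$ and $d_{\mathrm R}(\mathbf c_1,\mathbf c_2)=r$, then $$|B_r(\mathbf c_1)\cap B_1(\mathbf c_2)|=1+(q^m-q^r){r\brack 1}+(q^r-1){n\brack 1}.$$
   Context: The rank $\mathrm{rk}(\mathbf x)$ of $\mathbf x\in\mathrm{GF}(q^m)^n$ is the maximum number of its coordinates linearly independent over $\mathrm{GF}(q)$, and $d_{\mathrm R}(\mathbf x,\mathbf y)=\mathrm{rk}(\mathbf x-\mathbf y)$. $B_r(\mathbf x)$ is the set of vectors within rank distance $r$ of $\mathbf x$. ${n\brack u}$ denotes the Gaussian binomial coefficient (number of $u$-dimensional subspaces of $\mathrm{GF}(q)^n$); in particular ${n\brack 1}=(q^n-1)/(q-1)$. *)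

theory Defs
  imports "HOL-Analysis.Analysis"
begin

text \<open>K is a subfield of the (finite) field 'a; it plays the role of GF(q) inside GF(q^m).\<close>
definition is_subfield :: "'a::field set \<Rightarrow> bool" where
  "is_subfield K \<longleftrightarrow> 0 \<in> K \<and> 1 \<in> K \<and>
     (\<forall>x\<in>K. \<forall>y\<in>K. x + y \<in> K \<and> x - y \<in> K \<and> x * y \<in> K) \<and>
     (\<forall>x\<in>K. inverse x \<in> K)"

definition lin_indep_over :: "'a::field set \<Rightarrow> ('i \<Rightarrow> 'a) \<Rightarrow> 'i set \<Rightarrow> bool" where
  "lin_indep_over K v S \<longleftrightarrow>
     (\<forall>c. (\<forall>i\<in>S. c i \<in> K) \<and> (\<Sum>i\<in>S. c i * v i) = 0 \<longrightarrow> (\<forall>i\<in>S. c i = 0))"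

definition rk :: "'a::field set \<Rightarrow> 'a ^ 'n::finite \<Rightarrow> nat" where
  "rk K x = Max {card S | S. lin_indep_over K (\<lambda>i. x $ i) S}"

definition rank_dist :: "'a::field set \<Rightarrow> 'a ^ 'n::finite \<Rightarrow> 'a ^ 'n \<Rightarrow> nat" where
  "rank_dist K x y = rk K (x - y)"

definition rank_ball :: "'a::field set \<Rightarrow> nat \<Rightarrow> 'a ^ 'n::finite \<Rightarrow> ('a ^ 'n) set" where
  "rank_ball K r x = {y. rank_dist K x y \<le> r}"

definition gauss_binom1 :: "nat \<Rightarrow> nat \<Rightarrow> int" where
  "gauss_binom1 q k = (int q ^ k - 1) div (int q - 1)"

end

theory Submission imports Defs begin

definition spanI :: "'a::field set \<Rightarrow> ('b \<Rightarrow> 'a) \<Rightarrow> 'b set \<Rightarrow> 'a set" where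
  "spanI K f T = {(\<Sum>i\<in>T. c i * f i) | c. \<forall>i\<in>T. c i \<in> K}"

definition sm :: "'a::times \<Rightarrow> 'a^'n::finite \<Rightarrow> 'a^'n" where "sm a u = (\<chi> i. a * u $ i)"

context fixes K :: "'a::{finite,field} set" assumes sf: "is_subfield K"
begin

lemma sf0: "0 \<in> K" and sf1: "1 \<in> K" using sf by (auto simp: is_subfield_def)
lemma sfadd: "x \<in> K \<Longrightarrow> y \<in> K \<Longrightarrow> x + y \<in> K" using sf by (auto simp: is_subfield_def)
lemma sfdiff: "x \<in> K \<Longrightarrow> y \<in> K \<Longrightarrow> x - y \<in> K" using sf by (auto simp: is_subfield_def)
lemma sfmult: "x \<in> K \<Longrightarrow> y \<in> K \<Longrightarrow> x * y \<in> K" using sf by (auto simp: is_subfield_def)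
lemma sfinv: "x \<in> K \<Longrightarrow> inverse x \<in> K" using sf by (auto simp: is_subfield_def)
lemma sfdiv: "x \<in> K \<Longrightarrow> y \<in> K \<Longrightarrow> x / y \<in> K" by (simp add: divide_inverse sfmult sfinv)
lemma sfneg: "x \<in> K \<Longrightarrow> - x \<in> K" using sfdiff[OF sf0] by fastforce
lemma sfsum: "(\<And>i. i \<in> S \<Longrightarrow> g i \<in> K) \<Longrightarrow> sum g S \<in> K"
proof (induction S rule: infinite_finite_induct)
  case (infinite A) then show ?case by (simp add: sf0)
next
  case empty then show ?case by (simp add: sf0)
next
  case (insert x F) then show ?case by (simp add: sfadd)
qed

lemma span0: "0 \<in> spanI K f T"
  unfolding spanI_def by (rule CollectI, rule exI[of _ "\<lambda>_. 0"]) (simp add: sf0)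

lemma spanadd: assumes "x \<in> spanI K f T" "y \<in> spanI K f T" shows "x + y \<in> spanI K f T"
proof -
  obtain c d where "x = (\<Sum>i\<in>T. c i * f i)" "\<forall>i\<in>T. c i \<in> K" "y = (\<Sum>i\<in>T. d i * f i)" "\<forall>i\<in>T. d i \<in> K"
    using assms unfolding spanI_def by blast
  then show ?thesis unfolding spanI_def
    by (intro CollectI exI[of _ "\<lambda>i. c i + d i"]) (auto simp: sfadd distrib_right sum.distrib)
qed

lemma spanscale: assumes "x \<in> spanI K f T" "k \<in> K" shows "k * x \<in> spanI K f T"
proof -
  obtain c where "x = (\<Sum>i\<in>T. c i * f i)" "\<forall>i\<in>T. c i \<in> K"
    using assms unfolding spanI_def by blast
  then show ?thesis unfolding spanI_def using assms(2)
    by (intro CollectI exI[of _ "\<lambda>i. k * c i"]) (auto simp: sfmult sum_distrib_left mult.assoc)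
qed

lemma spanneg: "x \<in> spanI K f T \<Longrightarrow> - x \<in> spanI K f T"
  using spanscale[of x f T "-1"] by (simp add: sfneg sf1)

lemma spandiff: "x \<in> spanI K f T \<Longrightarrow> y \<in> spanI K f T \<Longrightarrow> x - y \<in> spanI K f T"
proof -
  assume "x \<in> spanI K f T" "y \<in> spanI K f T"
  then have "x + (-y) \<in> spanI K f T" using spanadd spanneg by blast
  then show ?thesis by simp
qed

lemma spangen: assumes "finite T" "i \<in> T" shows "f i \<in> spanI K f T"
proof -
  have "(\<Sum>j\<in>T. (if j = i then 1 else 0) * f j) = (\<Sum>j\<in>T. if j = i then f j else 0)"
    by (rule sum.cong) auto
  also have "\<dots> = f i" using assms by (simp add: sum.delta')
  finally show ?thesis unfolding spanI_def
    by (intro CollectI exI[of _ "\<lambda>j. if j = i then 1 else 0"]) (auto simp: sf0 sf1)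
qed

lemma spansum: "(\<And>i. i \<in> S \<Longrightarrow> v i \<in> K \<and> g i \<in> spanI K f T) \<Longrightarrow> (\<Sum>i\<in>S. v i * g i) \<in> spanI K f T"
proof (induction S rule: infinite_finite_induct)
  case (infinite A) then show ?case by (simp add: span0)
next
  case empty then show ?case by (simp add: span0)
next
  case (insert x F) then show ?case by (simp add: spanadd spanscale)
qed

lemma span_mono: "finite S \<Longrightarrow> (\<And>i. i \<in> S \<Longrightarrow> g i \<in> spanI K f T) \<Longrightarrow> spanI K g S \<subseteq> spanI K f T"
proof
  fix x assume fS: "finite S" and g: "\<And>i. i \<in> S \<Longrightarrow> g i \<in> spanI K f T" and "x \<in> spanI K g S"
  then obtain c where c: "x = (\<Sum>i\<in>S. c i * g i)" "\<forall>i\<in>S. c i \<in> K" unfolding spanI_def by blast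
  show "x \<in> spanI K f T" unfolding c(1) using c(2) g by (intro spansum) auto
qed

lemma span_image: assumes "finite T"
  shows "spanI K f T = (\<lambda>c. \<Sum>i\<in>T. c i * f i) ` (PiE T (\<lambda>_. K))"
proof
  show "spanI K f T \<subseteq> (\<lambda>c. \<Sum>i\<in>T. c i * f i) ` (PiE T (\<lambda>_. K))"
  proof
    fix x assume "x \<in> spanI K f T"
    then obtain c where c: "x = (\<Sum>i\<in>T. c i * f i)" "\<forall>i\<in>T. c i \<in> K" unfolding spanI_def by blast
    have "x = (\<Sum>i\<in>T. restrict c T i * f i)" using c by (auto intro: sum.cong)
    moreover have "restrict c T \<in> PiE T (\<lambda>_. K)" using c by auto
    ultimately show "x \<in> (\<lambda>c. \<Sum>i\<in>T. c i * f i) ` (PiE T (\<lambda>_. K))" by blast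
  qed
qed (auto simp: spanI_def)

lemma card_span_le: "finite T \<Longrightarrow> card (spanI K f T) \<le> card K ^ card T"
  using card_image_le[of "PiE T (\<lambda>_. K)" "\<lambda>c. \<Sum>i\<in>T. c i * f i"]
    finite_PiE[of T "\<lambda>_. K"]
  by (simp add: span_image card_PiE)

lemma indep_card_span: assumes "finite S" "lin_indep_over K g S"
  shows "card (spanI K g S) = card K ^ card S"
proof -
  have "inj_on (\<lambda>c. \<Sum>i\<in>S. c i * g i) (PiE S (\<lambda>_. K))"
  proof (rule inj_onI)
    fix v w assume v: "v \<in> PiE S (\<lambda>_. K)" and w: "w \<in> PiE S (\<lambda>_. K)"
      and eq: "(\<Sum>i\<in>S. v i * g i) = (\<Sum>i\<in>S. w i * g i)"
    have "(\<Sum>i\<in>S. (v i - w i) * g i) = 0" using eq by (simp add: left_diff_distrib sum_subtractf)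
    moreover have "\<forall>i\<in>S. v i - w i \<in> K" using v w by (auto intro!: sfdiff dest: PiE_mem)
    moreover have li: "\<And>c. (\<forall>i\<in>S. c i \<in> K) \<Longrightarrow> (\<Sum>i\<in>S. c i * g i) = 0 \<Longrightarrow> \<forall>i\<in>S. c i = 0"
      using assms(2) unfolding lin_indep_over_def by blast
    ultimately have "\<forall>i\<in>S. v i - w i = 0" by (rule_tac li) auto
    then show "v = w" using v w by (intro PiE_ext) auto
  qed
  then show ?thesis using assms(1) by (simp add: span_image card_image card_PiE)
qed


lemma finK: "finite K" by simp
lemma cardK2: "2 \<le> card K"
proof -
  have "{0,1} \<subseteq> K" using sf0 sf1 by auto
  then have "card {0::'a,1} \<le> card K" by (intro card_mono) auto
  then show ?thesis by simp
qed

lemma rk_fin: "finite {card S | S. lin_indep_over K (\<lambda>i. (x::'a^'n::finite) $ i) S}"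
proof -
  have "{card S | S. lin_indep_over K (\<lambda>i. x $ i) S} \<subseteq> {..CARD('n)}"
    by (auto intro: card_mono)
  then show ?thesis by (rule finite_subset) simp
qed

lemma rk_ge: "lin_indep_over K (\<lambda>i. (x::'a^'n::finite) $ i) S \<Longrightarrow> card S \<le> rk K x"
  unfolding rk_def by (rule Max_ge[OF rk_fin]) blast

lemma rk_ex: "\<exists>S. lin_indep_over K (\<lambda>i. (x::'a^'n::finite) $ i) S \<and> card S = rk K x"
proof -
  have "lin_indep_over K (\<lambda>i. x $ i) {}" by (simp add: lin_indep_over_def)
  then have "{card S | S. lin_indep_over K (\<lambda>i. x $ i) S} \<noteq> {}" by blast
  from Max_in[OF rk_fin this] show ?thesis unfolding rk_def by auto
qed

lemma rk_le_span:
  assumes "finite T" "\<And>j. (y::'a^'n::finite) $ j \<in> spanI K f T"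
  shows "rk K y \<le> card T"
proof -
  obtain S where S: "lin_indep_over K (\<lambda>i. y $ i) S" "card S = rk K y" using rk_ex by blast
  have "card K ^ card S = card (spanI K (\<lambda>i. y $ i) S)"
    using indep_card_span[OF _ S(1)] by simp
  also have "\<dots> \<le> card (spanI K f T)"
  proof (rule card_mono)
    show "spanI K (\<lambda>i. y $ i) S \<subseteq> spanI K f T" by (rule span_mono) (simp_all add: assms(2))
  qed simp
  also have "\<dots> \<le> card K ^ card T" by (rule card_span_le[OF assms(1)])
  finally have le: "card K ^ card S \<le> card K ^ card T" .
  have "1 < card K" using cardK2 by simp
  from power_le_imp_le_exp[OF this le] have "card S \<le> card T" .
  then show ?thesis using S by simp
qed

lemma rk_neg: "rk K (- (x::'a^'n::finite)) = rk K x"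
proof -
  have "lin_indep_over K (\<lambda>i. (- x) $ i) S = lin_indep_over K (\<lambda>i. x $ i) S" for S
    unfolding lin_indep_over_def by (simp add: sum_negf)
  then show ?thesis unfolding rk_def by (simp only:)
qed


lemma rank1_le: assumes "\<And>i. u $ i \<in> K" shows "rk K (sm a (u::'a^'n::finite)) \<le> 1"
proof -
  have "rk K (sm a u) \<le> card {()}"
  proof (rule rk_le_span[where f="\<lambda>_. a"])
    fix j
    show "sm a u $ j \<in> spanI K (\<lambda>_. a) {()}" unfolding spanI_def sm_def using assms
      by (intro CollectI exI[of _ "\<lambda>_. u $ j"]) (simp add: mult.commute)
  qed simp
  then show ?thesis by simp
qed

lemma rank1_decomp:
  assumes "rk K (e::'a^'n::finite) \<le> 1" "e \<noteq> 0"
  shows "\<exists>a u. a \<noteq> 0 \<and> (\<forall>i. u $ i \<in> K) \<and> e = sm a u"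
proof -
  obtain j where j: "e $ j \<noteq> 0" using assms(2) by (auto simp: vec_eq_iff)
  have inK: "e $ i / e $ j \<in> K" for i
  proof (rule ccontr)
    assume nk: "e $ i / e $ j \<notin> K"
    then have ij: "i \<noteq> j" using j sf1 by auto
    have "lin_indep_over K (\<lambda>i. e $ i) {i, j}"
      unfolding lin_indep_over_def
    proof (intro allI impI)
      fix c assume c: "(\<forall>k\<in>{i, j}. c k \<in> K) \<and> (\<Sum>k\<in>{i, j}. c k * e $ k) = 0"
      then have eq: "c i * e $ i + c j * e $ j = 0" using ij by simp
      have ci: "c i = 0"
      proof (rule ccontr)
        assume "c i \<noteq> 0"
        moreover have "c i * e $ i = - (c j * e $ j)" using eq by (simp add: eq_neg_iff_add_eq_0)
        ultimately have "e $ i / e $ j = - c j / c i" using j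
          by (simp add: field_simps)
        moreover have "- c j / c i \<in> K" using c by (auto intro!: sfdiv sfneg)
        ultimately show False using nk by simp
      qed
      then have "c j = 0" using eq j by simp
      with ci show "\<forall>k\<in>{i, j}. c k = 0" by simp
    qed
    from rk_ge[OF this] assms(1) ij show False by simp
  qed
  have "e = sm (e $ j) (\<chi> i. e $ i / e $ j)" unfolding sm_def vec_eq_iff using j by simp
  moreover have "\<forall>i. (\<chi> i. e $ i / e $ j) $ i \<in> K" using inK by simp
  ultimately show ?thesis using j by blast
qed


lemma delta_sum: "finite S \<Longrightarrow> j \<in> S \<Longrightarrow> (\<Sum>i\<in>S. (if i = j then 1 else 0) * g i) = (g j :: 'a)"
proof -
  assume "finite S" "j \<in> S"
  have "(\<Sum>i\<in>S. (if i = j then 1 else 0) * g i) = (\<Sum>i\<in>S. if i = j then g i else 0)"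
    by (rule sum.cong) auto
  also have "\<dots> = g j" using \<open>finite S\<close> \<open>j \<in> S\<close> by (simp add: sum.delta')
  finally show ?thesis .
qed

lemma coeffs_exist:
  fixes x :: "'a^'n::finite"
  assumes S: "lin_indep_over K (\<lambda>i. x $ i) S" "card S = rk K x"
  shows "\<exists>C. \<forall>j. (\<forall>i\<in>S. C j i \<in> K) \<and> x $ j = (\<Sum>i\<in>S. C j i * x $ i) \<and>
             (j \<in> S \<longrightarrow> (\<forall>i\<in>S. C j i = (if i = j then 1 else 0)))"
proof -
  have "\<exists>c. (\<forall>i\<in>S. c i \<in> K) \<and> x $ j = (\<Sum>i\<in>S. c i * x $ i) \<and>
             (j \<in> S \<longrightarrow> (\<forall>i\<in>S. c i = (if i = j then 1 else 0)))" for j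
  proof (cases "j \<in> S")
    case True
    then show ?thesis
      by (intro exI[of _ "\<lambda>i. if i = j then 1 else 0"]) (simp add: delta_sum sf0 sf1)
  next
    case False
    have "card (insert j S) = Suc (rk K x)" using False S(2) by simp
    then have "\<not> lin_indep_over K (\<lambda>i. x $ i) (insert j S)" using rk_ge by fastforce
    then obtain d where d: "\<forall>i\<in>insert j S. d i \<in> K" "(\<Sum>i\<in>insert j S. d i * x $ i) = 0"
      "\<exists>i\<in>insert j S. d i \<noteq> 0"
      unfolding lin_indep_over_def by blast
    have eq: "d j * x $ j + (\<Sum>i\<in>S. d i * x $ i) = 0" using d(2) False by simp
    have dj: "d j \<noteq> 0"
    proof
      assume "d j = 0"
      then have "(\<Sum>i\<in>S. d i * x $ i) = 0" using eq by simp
      then have "\<forall>i\<in>S. d i = 0" using S(1) d(1) unfolding lin_indep_over_def by blast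
      then show False using d(3) \<open>d j = 0\<close> by blast
    qed
    have "(\<Sum>i\<in>S. (- d i / d j) * x $ i) = (- 1 / d j) * (\<Sum>i\<in>S. d i * x $ i)"
      by (simp add: sum_distrib_left)
    also have "\<dots> = x $ j" using eq dj by (simp add: eq_neg_iff_add_eq_0[symmetric] field_simps)
    finally show ?thesis using False d(1)
      by (intro exI[of _ "\<lambda>i. - d i / d j"]) (auto intro!: sfdiv sfneg)
  qed
  then have "\<forall>j. \<exists>c. (\<forall>i\<in>S. c i \<in> K) \<and> x $ j = (\<Sum>i\<in>S. c i * x $ i) \<and>
             (j \<in> S \<longrightarrow> (\<forall>i\<in>S. c i = (if i = j then 1 else 0)))" by blast
  then show ?thesis by (rule choice)
qed


context
  fixes x :: "'a^'n::finite" and S :: "'n set" and C :: "'n \<Rightarrow> 'n \<Rightarrow> 'a" and r :: nat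
  assumes Sind: "lin_indep_over K (\<lambda>i. x $ i) S" and Scard: "card S = r" and rkx: "rk K x = r"
    and CK: "\<And>j i. i \<in> S \<Longrightarrow> C j i \<in> K"
    and Cx: "\<And>j. x $ j = (\<Sum>i\<in>S. C j i * x $ i)"
    and Cd: "\<And>j i. j \<in> S \<Longrightarrow> i \<in> S \<Longrightarrow> C j i = (if i = j then 1 else 0)"
begin

lemma Csum: "j \<in> S \<Longrightarrow> (\<Sum>i\<in>S. C j i * g i) = g j"
proof -
  assume j: "j \<in> S"
  have "(\<Sum>i\<in>S. C j i * g i) = (\<Sum>i\<in>S. (if i = j then 1 else 0) * g i)"
    using j by (intro sum.cong) (auto simp: Cd)
  also have "\<dots> = g j" using j by (simp add: delta_sum)
  finally show ?thesis .
qed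

lemma xV: "x $ j \<in> spanI K (\<lambda>i. x $ i) S"
  unfolding spanI_def using CK by (intro CollectI exI[of _ "C j"]) (auto simp: Cx[of j, symmetric])

lemma case_in:
  assumes "a \<in> spanI K (\<lambda>i. x $ i) S" "\<And>j. u $ j \<in> K"
  shows "rk K (x - sm a u) \<le> r"
proof -
  have "rk K (x - sm a u) \<le> card S"
  proof (rule rk_le_span)
    fix j
    have "u $ j * a \<in> spanI K (\<lambda>i. x $ i) S" by (rule spanscale[OF assms(1) assms(2)])
    then show "(x - sm a u) $ j \<in> spanI K (\<lambda>i. x $ i) S"
      unfolding sm_def using xV by (simp add: spandiff mult.commute)
  qed simp
  then show ?thesis using Scard by simp
qed

lemma case_U:
  assumes "\<And>j. u $ j = (\<Sum>i\<in>S. C j i * u $ i)"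
  shows "rk K (x - sm a u) \<le> r"
proof -
  have "rk K (x - sm a u) \<le> card S"
  proof (rule rk_le_span)
    fix j
    have "(\<Sum>i\<in>S. C j i * (x - sm a u) $ i) = (\<Sum>i\<in>S. C j i * x $ i) - a * (\<Sum>i\<in>S. C j i * u $ i)"
      unfolding sm_def by (simp add: right_diff_distrib sum_subtractf sum_distrib_left mult.left_commute)
    also have "\<dots> = (x - sm a u) $ j" using Cx[of j] assms[of j] by (simp add: sm_def)
    finally have "(x - sm a u) $ j = (\<Sum>i\<in>S. C j i * (x - sm a u) $ i)" by simp
    then show "(x - sm a u) $ j \<in> spanI K (\<lambda>i. (x - sm a u) $ i) S"
      unfolding spanI_def using CK by blast
  qed simp
  then show ?thesis using Scard by simp
qed

lemma case_notU:
  assumes aV: "a \<notin> spanI K (\<lambda>i. x $ i) S" and uK: "\<And>j. u $ j \<in> K"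
    and j: "u $ j \<noteq> (\<Sum>i\<in>S. C j i * u $ i)"
  shows "\<not> rk K (x - sm a u) \<le> r"
proof -
  define y where "y = x - sm a u"
  have yi: "y $ i = x $ i - a * u $ i" for i unfolding y_def sm_def by simp
  have jS: "j \<notin> S" using j Csum by auto
  have fS: "finite S" by simp
  have "lin_indep_over K (\<lambda>i. y $ i) (insert j S)"
    unfolding lin_indep_over_def
  proof (intro allI impI)
    fix d assume d: "(\<forall>i\<in>insert j S. d i \<in> K) \<and> (\<Sum>i\<in>insert j S. d i * y $ i) = 0"
    have dK: "d i \<in> K" if "i \<in> insert j S" for i using d that by blast
    have eq: "d j * y $ j + (\<Sum>i\<in>S. d i * y $ i) = 0" using d jS by simp
    define \<beta> where "\<beta> = d j * u $ j + (\<Sum>i\<in>S. d i * u $ i)"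
    define \<gamma> where "\<gamma> i = d i + d j * C j i" for i
    have \<gamma>K: "\<gamma> i \<in> K" if "i \<in> S" for i
      unfolding \<gamma>_def using that dK CK by (auto intro!: sfadd sfmult)
    have \<beta>K: "\<beta> \<in> K" unfolding \<beta>_def using dK uK by (auto intro!: sfadd sfmult sfsum)
    have g1: "(\<Sum>i\<in>S. \<gamma> i * x $ i) = (\<Sum>i\<in>S. d i * x $ i) + d j * x $ j"
      unfolding \<gamma>_def Cx[of j]
      by (simp add: distrib_right sum.distrib sum_distrib_left mult.assoc)
    have g2: "(\<Sum>i\<in>S. d i * y $ i) = (\<Sum>i\<in>S. d i * x $ i) - a * (\<Sum>i\<in>S. d i * u $ i)"
      unfolding yi by (simp add: right_diff_distrib sum_subtractf sum_distrib_left mult.left_commute)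
    have key: "(\<Sum>i\<in>S. \<gamma> i * x $ i) = a * \<beta>"
      using eq unfolding g2 unfolding g1 \<beta>_def yi by (simp add: algebra_simps)
    have b0: "\<beta> = 0"
    proof (rule ccontr)
      assume nz: "\<beta> \<noteq> 0"
      have s1: "(\<Sum>i\<in>S. \<gamma> i * x $ i) / \<beta> = (\<Sum>i\<in>S. (\<gamma> i / \<beta>) * x $ i)"
        by (simp add: sum_divide_distrib)
      have "a = (\<Sum>i\<in>S. (\<gamma> i / \<beta>) * x $ i)"
        using nz unfolding s1[symmetric] key by simp
      moreover have "(\<Sum>i\<in>S. (\<gamma> i / \<beta>) * x $ i) \<in> spanI K (\<lambda>i. x $ i) S"
        unfolding spanI_def
        by (rule CollectI, rule exI[of _ "\<lambda>i. \<gamma> i / \<beta>"]) (use \<gamma>K \<beta>K in \<open>auto intro!: sfdiv\<close>)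
      ultimately show False using aV by simp
    qed
    have "\<forall>i\<in>S. \<gamma> i = 0" using Sind \<gamma>K key b0 unfolding lin_indep_over_def by simp
    then have di: "d i = - d j * C j i" if "i \<in> S" for i using that unfolding \<gamma>_def
      by (simp add: eq_neg_iff_add_eq_0)
    have "(\<Sum>i\<in>S. d i * u $ i) = - d j * (\<Sum>i\<in>S. C j i * u $ i)"
      using di by (simp add: sum_distrib_left mult.assoc)
    then have "d j * (u $ j - (\<Sum>i\<in>S. C j i * u $ i)) = 0"
      using b0 unfolding \<beta>_def by (simp add: algebra_simps)
    then have dj0: "d j = 0" using j by simp
    then show "\<forall>i\<in>insert j S. d i = 0" using di by simp
  qed
  from rk_ge[OF this] have "card (insert j S) \<le> rk K y" .
  then show ?thesis using jS Scard unfolding y_def by simp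
qed


lemma card_Kn: "card {u::'a^'n. \<forall>j. u $ j \<in> K} = card K ^ CARD('n)"
proof -
  have inj: "inj_on vec_nth {u::'a^'n. \<forall>j. u $ j \<in> K}" by (auto intro!: inj_onI simp: vec_eq_iff)
  have img: "vec_nth ` {u::'a^'n. \<forall>j. u $ j \<in> K} = PiE UNIV (\<lambda>_. K)"
  proof
    show "vec_nth ` {u::'a^'n. \<forall>j. u $ j \<in> K} \<subseteq> PiE UNIV (\<lambda>_. K)" by auto
    show "PiE UNIV (\<lambda>_. K) \<subseteq> vec_nth ` {u::'a^'n. \<forall>j. u $ j \<in> K}"
    proof
      fix f :: "'n \<Rightarrow> 'a" assume "f \<in> PiE UNIV (\<lambda>_. K)"
      then have "vec_lambda f \<in> {u::'a^'n. \<forall>j. u $ j \<in> K}" by auto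
      moreover have "f = vec_nth (vec_lambda f)" by (simp add: fun_eq_iff)
      ultimately show "f \<in> vec_nth ` {u::'a^'n. \<forall>j. u $ j \<in> K}" by blast
    qed
  qed
  have "card {u::'a^'n. \<forall>j. u $ j \<in> K} = card (PiE (UNIV::'n set) (\<lambda>_. K))"
    using card_image[OF inj] img by simp
  also have "\<dots> = card K ^ CARD('n)" by (simp add: card_PiE)
  finally show ?thesis .
qed

lemma card_U: "card {u::'a^'n. (\<forall>j. u $ j \<in> K) \<and> (\<forall>j. u $ j = (\<Sum>i\<in>S. C j i * u $ i))} = card K ^ r"
proof -
  define g where "g w = (\<chi> j. \<Sum>i\<in>S. C j i * w i)" for w :: "'n \<Rightarrow> 'a"
  have gi: "g w $ i = w i" if "i \<in> S" for w i unfolding g_def using that by (simp add: Csum)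
  have inj: "inj_on g (PiE S (\<lambda>_. K))"
  proof (rule inj_onI)
    fix v w assume v: "v \<in> PiE S (\<lambda>_. K)" and w: "w \<in> PiE S (\<lambda>_. K)" and "g v = g w"
    then have "v i = w i" if "i \<in> S" for i using gi[OF that, of v] gi[OF that, of w] by simp
    then show "v = w" using v w by (intro PiE_ext) auto
  qed
  have img: "g ` PiE S (\<lambda>_. K) = {u::'a^'n. (\<forall>j. u $ j \<in> K) \<and> (\<forall>j. u $ j = (\<Sum>i\<in>S. C j i * u $ i))}"
  proof
    show "g ` PiE S (\<lambda>_. K) \<subseteq> {u. (\<forall>j. u $ j \<in> K) \<and> (\<forall>j. u $ j = (\<Sum>i\<in>S. C j i * u $ i))}"
    proof (clarify, intro conjI allI)
      fix w j assume w: "w \<in> PiE S (\<lambda>_. K)"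
      have "g w $ j = (\<Sum>i\<in>S. C j i * w i)" unfolding g_def by simp
      also have "\<dots> \<in> K" by (rule sfsum) (use w CK in \<open>auto intro: sfmult\<close>)
      finally show "g w $ j \<in> K" .
      have "(\<Sum>i\<in>S. C j i * g w $ i) = (\<Sum>i\<in>S. C j i * w i)" by (intro sum.cong) (auto simp: gi)
      then show "g w $ j = (\<Sum>i\<in>S. C j i * g w $ i)" unfolding g_def by simp
    qed
    show "{u. (\<forall>j. u $ j \<in> K) \<and> (\<forall>j. u $ j = (\<Sum>i\<in>S. C j i * u $ i))} \<subseteq> g ` PiE S (\<lambda>_. K)"
    proof clarify
      fix u :: "'a^'n" assume uK: "\<forall>j. u $ j \<in> K" and uC: "\<forall>j. u $ j = (\<Sum>i\<in>S. C j i * u $ i)"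
      have "restrict (\<lambda>i. u $ i) S \<in> PiE S (\<lambda>_. K)" using uK by auto
      moreover have "g (restrict (\<lambda>i. u $ i) S) = u"
        unfolding g_def vec_eq_iff
      proof
        fix j
        have "(\<Sum>i\<in>S. C j i * restrict (\<lambda>i. u $ i) S i) = (\<Sum>i\<in>S. C j i * u $ i)"
          by (rule sum.cong) auto
        also have "\<dots> = u $ j" using uC[rule_format, of j] by (rule sym)
        finally show "(\<chi> j. \<Sum>i\<in>S. C j i * restrict (\<lambda>i. u $ i) S i) $ j = u $ j" by simp
      qed
      ultimately show "u \<in> g ` PiE S (\<lambda>_. K)" by (metis image_eqI)
    qed
  qed
  show ?thesis unfolding img[symmetric] card_image[OF inj] using Scard by (simp add: card_PiE)
qed

lemma card_V: "card (spanI K (\<lambda>i. x $ i) S) = card K ^ r"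
  using indep_card_span[OF _ Sind] Scard by simp


lemma card_D:
  "card {(a, u). a \<noteq> 0 \<and> (\<forall>j. u $ j \<in> K) \<and> u \<noteq> 0 \<and> rk K (x - sm a (u::'a^'n)) \<le> r}
   = (card K ^ r - 1) * (card K ^ CARD('n) - 1) + (CARD('a) - card K ^ r) * (card K ^ r - 1)"
proof -
  define V where "V = spanI K (\<lambda>i. x $ i) S"
  define Kn where "Kn = {u::'a^'n. \<forall>j. u $ j \<in> K}"
  define U where "U = {u::'a^'n. (\<forall>j. u $ j \<in> K) \<and> (\<forall>j. u $ j = (\<Sum>i\<in>S. C j i * u $ i))}"
  have V0: "0 \<in> V" unfolding V_def by (rule span0)
  have Kn0: "0 \<in> Kn" unfolding Kn_def using sf0 by simp
  have U0: "(0::'a^'n) \<in> U" unfolding U_def using sf0 by simp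
  have UKn: "U \<subseteq> Kn" unfolding U_def Kn_def by auto
  have Deq: "{(a, u). a \<noteq> 0 \<and> (\<forall>j. u $ j \<in> K) \<and> u \<noteq> 0 \<and> rk K (x - sm a (u::'a^'n)) \<le> r}
     = (V - {0}) \<times> (Kn - {0}) \<union> (- V) \<times> (U - {0})"
  proof (intro equalityI subsetI)
    fix p assume "p \<in> {(a, u). a \<noteq> 0 \<and> (\<forall>j. u $ j \<in> K) \<and> u \<noteq> 0 \<and> rk K (x - sm a (u::'a^'n)) \<le> r}"
    then obtain a u where p: "p = (a, u)" "a \<noteq> 0" "\<forall>j. u $ j \<in> K" "u \<noteq> 0" "rk K (x - sm a u) \<le> r"
      by blast
    show "p \<in> (V - {0}) \<times> (Kn - {0}) \<union> (- V) \<times> (U - {0})"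
    proof (cases "a \<in> V")
      case True
      then show ?thesis using p unfolding Kn_def by auto
    next
      case False
      have "\<forall>j. u $ j = (\<Sum>i\<in>S. C j i * u $ i)"
      proof (rule ccontr)
        assume "\<not> (\<forall>j. u $ j = (\<Sum>i\<in>S. C j i * u $ i))"
        then obtain j where "u $ j \<noteq> (\<Sum>i\<in>S. C j i * u $ i)" by blast
        from case_notU[OF False[unfolded V_def] _ this] p show False by blast
      qed
      then have "u \<in> U" using p(3) unfolding U_def by blast
      then show ?thesis using p False by blast
    qed
  next
    fix p assume "p \<in> (V - {0}) \<times> (Kn - {0}) \<union> (- V) \<times> (U - {0})"
    then obtain a u where p: "p = (a, u)" and
      cases: "(a \<in> V \<and> a \<noteq> 0 \<and> u \<in> Kn \<and> u \<noteq> 0) \<or> (a \<notin> V \<and> u \<in> U \<and> u \<noteq> 0)" by blast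
    then show "p \<in> {(a, u). a \<noteq> 0 \<and> (\<forall>j. u $ j \<in> K) \<and> u \<noteq> 0 \<and> rk K (x - sm a (u::'a^'n)) \<le> r}"
    proof (elim disjE)
      assume h: "a \<in> V \<and> a \<noteq> 0 \<and> u \<in> Kn \<and> u \<noteq> 0"
      then have "rk K (x - sm a u) \<le> r" by (intro case_in) (auto simp: V_def Kn_def)
      then show ?thesis using h p unfolding Kn_def by auto
    next
      assume h: "a \<notin> V \<and> u \<in> U \<and> u \<noteq> 0"
      have uU: "(\<forall>j. u $ j \<in> K) \<and> (\<forall>j. u $ j = (\<Sum>i\<in>S. C j i * u $ i))" using h unfolding U_def by blast
      have "rk K (x - sm a u) \<le> r" by (rule case_U) (use uU in blast)
      moreover have "a \<noteq> 0" using h V0 by auto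
      ultimately show ?thesis using h p uU by blast
    qed
  qed
  have cV: "card V = card K ^ r" unfolding V_def by (rule card_V)
  have cKn: "card Kn = card K ^ CARD('n)" unfolding Kn_def by (rule card_Kn)
  have cU: "card U = card K ^ r" unfolding U_def by (rule card_U)
  have cC: "card (- V) = CARD('a) - card V"
    by (metis Compl_eq_Diff_UNIV card_Diff_subset finite subset_UNIV)
  have "card ((V - {0}) \<times> (Kn - {0}) \<union> (- V) \<times> (U - {0}))
        = card ((V - {0}) \<times> (Kn - {0})) + card ((- V) \<times> (U - {0}))"
    by (rule card_Un_disjoint) auto
  also have "\<dots> = (card K ^ r - 1) * (card K ^ CARD('n) - 1) + (CARD('a) - card K ^ r) * (card K ^ r - 1)"
    using V0 Kn0 U0 cV cKn cU cC by (simp add: card_cartesian_product)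
  finally show ?thesis unfolding Deq .
qed


lemma card_E:
  "(card K - 1) * card ({e. rk K e \<le> 1 \<and> rk K (x - e) \<le> r} - {0})
   = (card K ^ r - 1) * (card K ^ CARD('n) - 1) + (CARD('a) - card K ^ r) * (card K ^ r - 1)"
proof -
  define D where "D = {(a, u). a \<noteq> 0 \<and> (\<forall>j. u $ j \<in> K) \<and> u \<noteq> 0 \<and> rk K (x - sm a (u::'a^'n)) \<le> r}"
  define E where "E = {e. rk K e \<le> 1 \<and> rk K (x - e) \<le> r}"
  define f where "f = (\<lambda>(a, u). sm a (u::'a^'n))"
  have img: "f ` D = E - {0}"
  proof (intro equalityI subsetI)
    fix e assume "e \<in> f ` D"
    then obtain a u where au: "e = sm a u" "a \<noteq> 0" "\<forall>j. u $ j \<in> K" "u \<noteq> 0" "rk K (x - sm a u) \<le> r"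
      unfolding D_def f_def by auto
    obtain j where "u $ j \<noteq> 0" using au(4) by (auto simp: vec_eq_iff)
    then have "e $ j \<noteq> 0" using au(1,2) by (simp add: sm_def)
    then have "e \<noteq> 0" by auto
    moreover have "rk K e \<le> 1" unfolding au(1) by (rule rank1_le) (use au(3) in blast)
    ultimately show "e \<in> E - {0}" using au unfolding E_def by blast
  next
    fix e assume e: "e \<in> E - {0}"
    then obtain a u where au: "a \<noteq> 0" "\<forall>i. u $ i \<in> K" "e = sm a u"
      using rank1_decomp unfolding E_def by blast
    have "u \<noteq> 0" using au e by (auto simp: sm_def vec_eq_iff)
    then have "(a, u) \<in> D" using au e unfolding D_def E_def by blast
    then show "e \<in> f ` D" using au unfolding f_def by force
  qed
  have fib: "card {d \<in> D. f d = b} = card K - 1" if b: "b \<in> f ` D" for b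
  proof -
    obtain a u where au: "(a, u) \<in> D" "b = sm a u" using b unfolding f_def by auto
    have a0: "a \<noteq> 0" and uK: "\<forall>j. u $ j \<in> K" and u0: "u \<noteq> 0" using au(1) unfolding D_def by auto
    obtain j where uj: "u $ j \<noteq> 0" using u0 by (auto simp: vec_eq_iff)
    define h where "h k = (k * a, (\<chi> i. u $ i / k) :: 'a^'n)" for k
    have hs: "sm (k * a) (\<chi> i. u $ i / k) = sm a u" if "k \<noteq> 0" for k
      using that unfolding sm_def by (simp add: vec_eq_iff)
    have "{d \<in> D. f d = b} = h ` (K - {0})"
    proof (intro equalityI subsetI)
      fix d assume d: "d \<in> {d \<in> D. f d = b}"
      then obtain a' u' where a'u': "d = (a', u')" "a' \<noteq> 0" "\<forall>j. u' $ j \<in> K" "sm a' u' = sm a u"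
        using au(2) unfolding D_def f_def by auto
      have e1: "a' * u' $ i = a * u $ i" for i using a'u'(4) unfolding sm_def by (simp add: vec_eq_iff)
      then have u'j: "u' $ j \<noteq> 0" using uj a0 by (metis mult_eq_0_iff)
      define k where "k = u $ j / u' $ j"
      have kK: "k \<in> K - {0}" unfolding k_def using uK a'u'(3) uj u'j by (auto intro: sfdiv)
      have a': "a' = k * a" unfolding k_def using e1[of j] u'j by (simp add: field_simps)
      have "u' $ i = u $ i / k" for i
        using e1[of i] a' kK a0 by (simp add: field_simps)
      then have "d = h k" unfolding h_def a'u'(1) a' by (simp add: vec_eq_iff)
      then show "d \<in> h ` (K - {0})" using kK by blast
    next
      fix d assume "d \<in> h ` (K - {0})"
      then obtain k where k: "k \<in> K" "k \<noteq> 0" "d = h k" by blast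
      have "(\<chi> i. u $ i / k) $ i \<in> K" for i using uK k by (simp add: sfdiv)
      moreover have "(\<chi> i. u $ i / k) \<noteq> (0 :: 'a^'n)" using uj k by (auto simp: vec_eq_iff)
      moreover have "k * a \<noteq> 0" using k a0 by simp
      ultimately show "d \<in> {d \<in> D. f d = b}"
        using au k hs[of k] unfolding D_def f_def h_def by auto
    qed
    moreover have "inj_on h (K - {0})" unfolding h_def using a0 by (auto intro!: inj_onI)
    ultimately have "card {d \<in> D. f d = b} = card (K - {0})" by (simp add: card_image)
    also have "\<dots> = card K - 1" using sf0 by simp
    finally show ?thesis .
  qed
  have DU: "D = (\<Union>b\<in>f ` D. {d \<in> D. f d = b})" by auto
  have "card (\<Union>b\<in>f ` D. {d \<in> D. f d = b}) = (\<Sum>b\<in>f ` D. card {d \<in> D. f d = b})"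
    by (rule card_UN_disjoint) auto
  then have "card D = (\<Sum>b\<in>f ` D. card {d \<in> D. f d = b})" using DU by simp
  also have "\<dots> = (card K - 1) * card (f ` D)" using fib by simp
  finally have "card D = (card K - 1) * card (E - {0})" using img by simp
  then show ?thesis using card_D unfolding D_def E_def by simp
qed

end

end

lemma gb_mult: "int q \<ge> 2 \<Longrightarrow> (int q - 1) * gauss_binom1 q k = int q ^ k - 1"
proof -
  assume q: "int q \<ge> 2"
  have "int q ^ k - 1 = (int q - 1) * (\<Sum>i<k. int q ^ i)" by (rule power_diff_1_eq)
  then show ?thesis unfolding gauss_binom1_def using q by simp
qed

theorem proposition3:
  fixes K :: "'a::{finite,field} set" and q m r :: nat
    and c1 c2 :: "'a ^ 'n::finite"
  assumes "is_subfield K"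
    and "q = card K"
    and "CARD('a) = q ^ m"
    and "rank_dist K c1 c2 = r"
  shows "int (card (rank_ball K r c1 \<inter> rank_ball K 1 c2)) =
           1 + (int q ^ m - int q ^ r) * gauss_binom1 q r
             + (int q ^ r - 1) * gauss_binom1 q CARD('n)"
proof -
  note sf = assms(1)
  define x where "x = c1 - c2"
  have rkx: "rk K x = r" using assms(4) unfolding x_def rank_dist_def by simp
  obtain S where S: "lin_indep_over K (\<lambda>i. x $ i) S" "card S = rk K x" using rk_ex[OF sf] by blast
  obtain C where C: "\<forall>j. (\<forall>i\<in>S. C j i \<in> K) \<and> x $ j = (\<Sum>i\<in>S. C j i * x $ i) \<and>
             (j \<in> S \<longrightarrow> (\<forall>i\<in>S. C j i = (if i = j then 1 else 0)))"
    using coeffs_exist[OF sf S] by blast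
  have Sr: "card S = r" using S rkx by simp
  have CK: "\<And>j i. i \<in> S \<Longrightarrow> C j i \<in> K" using C by blast
  have Cx: "\<And>j. x $ j = (\<Sum>i\<in>S. C j i * x $ i)" using C by blast
  have Cd: "\<And>j i. j \<in> S \<Longrightarrow> i \<in> S \<Longrightarrow> C j i = (if i = j then 1 else 0)" using C by blast
  define E where "E = {e. rk K e \<le> 1 \<and> rk K (x - e) \<le> r}"
  have cE: "(card K - 1) * card (E - {0})
     = (card K ^ r - 1) * (card K ^ CARD('n) - 1) + (CARD('a) - card K ^ r) * (card K ^ r - 1)"
    unfolding E_def by (rule card_E[OF sf S(1) Sr rkx CK Cx Cd])
  have cV: "card (spanI K (\<lambda>i. x $ i) S) = card K ^ r" by (rule card_V[OF sf S(1) Sr rkx CK Cx Cd])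
  have "card (spanI K (\<lambda>i. x $ i) S) \<le> CARD('a)" by (rule card_mono) auto
  then have qrm: "q ^ r \<le> q ^ m" using cV assms(2,3) by simp
  have "sm 0 (0::'a^'n) = 0" unfolding sm_def by (simp add: vec_eq_iff)
  moreover have "rk K (sm 0 (0::'a^'n)) \<le> 1" by (rule rank1_le[OF sf]) (simp add: sf0[OF sf])
  ultimately have E0: "0 \<in> E" unfolding E_def using rkx by simp
  have "card E > 0" using E0 by (auto simp: card_gt_0_iff)
  then have cE1: "card E = card (E - {0}) + 1" using E0 by (simp add: card_Diff_singleton)
  have ball: "rank_ball K r c1 \<inter> rank_ball K 1 c2 = (\<lambda>e. c2 + e) ` E"
  proof (intro equalityI subsetI)
    fix y assume "y \<in> rank_ball K r c1 \<inter> rank_ball K 1 c2"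
    then have h: "rk K (c1 - y) \<le> r" "rk K (c2 - y) \<le> 1" unfolding rank_ball_def rank_dist_def by auto
    have e1: "c1 - y = x - (y - c2)" and e2: "c2 - y = - (y - c2)" unfolding x_def by simp_all
    have "y - c2 \<in> E" using h unfolding e1 e2 rk_neg[OF sf] E_def by simp
    moreover have "y = c2 + (y - c2)" by simp
    ultimately show "y \<in> (\<lambda>e. c2 + e) ` E" by blast
  next
    fix y assume "y \<in> (\<lambda>e. c2 + e) ` E"
    then obtain e where e: "e \<in> E" "y = c2 + e" by blast
    have e1: "c1 - y = x - e" and e2: "c2 - y = - e" unfolding x_def e(2) by simp_all
    show "y \<in> rank_ball K r c1 \<inter> rank_ball K 1 c2"
      using e(1) unfolding rank_ball_def rank_dist_def by (simp add: e1 e2 rk_neg[OF sf] E_def)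
  qed
  have cball: "card (rank_ball K r c1 \<inter> rank_ball K 1 c2) = card E"
    unfolding ball by (rule card_image) (auto intro: inj_onI)
  have q2: "int q \<ge> 2" using cardK2[OF sf] assms(2) by simp
  define Q where "Q = int q"
  define N where "N = CARD('n)"
  have qrN: "q ^ r \<ge> 1" "q ^ N \<ge> 1" using q2 by simp_all
  have "int ((q - 1) * card (E - {0})) = int ((q ^ r - 1) * (q ^ N - 1) + (q ^ m - q ^ r) * (q ^ r - 1))"
    using cE assms(2,3) unfolding N_def by simp
  then have key: "(Q - 1) * int (card (E - {0})) = (Q ^ r - 1) * (Q ^ N - 1) + (Q ^ m - Q ^ r) * (Q ^ r - 1)"
    using q2 qrm qrN unfolding Q_def by (simp add: of_nat_diff)
  have g1: "(Q - 1) * gauss_binom1 q r = Q ^ r - 1" and g2: "(Q - 1) * gauss_binom1 q N = Q ^ N - 1"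
    using gb_mult[OF q2] unfolding Q_def by auto
  have "(Q - 1) * (int (card E) - 1) = (Q - 1) * ((Q ^ m - Q ^ r) * gauss_binom1 q r + (Q ^ r - 1) * gauss_binom1 q N)"
  proof -
    have "(Q - 1) * ((Q ^ m - Q ^ r) * gauss_binom1 q r + (Q ^ r - 1) * gauss_binom1 q N)
        = (Q ^ m - Q ^ r) * ((Q - 1) * gauss_binom1 q r) + (Q ^ r - 1) * ((Q - 1) * gauss_binom1 q N)"
      by (simp add: algebra_simps)
    also have "\<dots> = (Q - 1) * int (card (E - {0}))" unfolding g1 g2 key by (simp add: algebra_simps)
    finally have X: "(Q - 1) * ((Q ^ m - Q ^ r) * gauss_binom1 q r + (Q ^ r - 1) * gauss_binom1 q N)
        = (Q - 1) * int (card (E - {0}))" .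
    have "int (card E) - 1 = int (card (E - {0}))" using cE1 by simp
    then show ?thesis using X by metis
  qed
  moreover have "Q - 1 \<noteq> 0" using q2 unfolding Q_def by simp
  ultimately have "int (card E) - 1 = (Q ^ m - Q ^ r) * gauss_binom1 q r + (Q ^ r - 1) * gauss_binom1 q N"
    by simp
  then show ?thesis unfolding cball Q_def N_def by simp
qed

end
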